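(* Let $n\ge2$, $F\in GL^+(n)$, $\mu>0$, $\mu_c\ge0$. If $X$ is a symmetric matrix with $X^2=FF^T$ and $\det X>0$, then $R=X^TF^{-T}\in SO(n)$ is a critical point of $\widetilde W_{\mu,\mu_c}(\cdot;F)$. In particular, the orthogonal factor $R_p$ of the polar decomposition $F=R_pU$ ($R_p\in SO(n)$, $U$ symmetric positive definite) is a critical point of $\widetilde W_{\mu,\mu_c}(\cdot;F)$.
   Context: $\mathrm{sym}(Y)=\tfrac12(Y+Y^T)$, $\mathrm{skew}(Y)=\tfrac12(Y-Y^T)$, $\|Y\|^2=\mathrm{tr}(Y^TY)$. For $F\in GL^+(n)$ (positive determinant), $\mu>0$, $\mu_c\ge0$: $\widetilde W_{\mu,\mu_c}(R;F)=\mu\|\mathrm{sym}(R^TF-\mathbb I_n)\|^2+\mu_c\|\mathrm{skew}(R^TF-\mathbb I_n)\|^2$ for $R\in SO(n)$; critical points are those of its restriction to the submanifold $SO(n)\subset\mathcal M_{n\times n}(\mathbb R)$. *)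

theory Defs
  imports "HOL-Analysis.Analysis"
begin

definition msym :: "real^'n^'n \<Rightarrow> real^'n^'n" where
  "msym Y = (1/2) *\<^sub>R (Y + transpose Y)"

definition mskew :: "real^'n^'n \<Rightarrow> real^'n^'n" where
  "mskew Y = (1/2) *\<^sub>R (Y - transpose Y)"

definition fro_sq :: "real^'n^'n \<Rightarrow> real" where
  "fro_sq Y = trace (transpose Y ** Y)"

definition Wtilde :: "real \<Rightarrow> real \<Rightarrow> real^'n^'n \<Rightarrow> real^'n^'n \<Rightarrow> real" where
  "Wtilde mu muc F R =
     mu * fro_sq (msym (transpose R ** F - mat 1)) + muc * fro_sq (mskew (transpose R ** F - mat 1))"

definition SOn :: "(real^'n^'n) set" where
  "SOn = {Q. rotation_matrix Q}"

text \<open>Critical point of the restriction of a (smooth) function f on matrices to the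
  submanifold SO(n): R lies in SO(n) and the derivative of f along every differentiable
  curve in SO(n) through R vanishes at R (i.e. df(R) vanishes on the tangent space T_R SO(n)).\<close>
definition critical_point_SO :: "(real^'n^'n \<Rightarrow> real) \<Rightarrow> real^'n^'n \<Rightarrow> bool" where
  "critical_point_SO f R \<longleftrightarrow> R \<in> SOn \<and>
     (\<forall>\<gamma> v. (\<forall>t. \<gamma> t \<in> SOn) \<longrightarrow> \<gamma> 0 = R \<longrightarrow> (\<gamma> has_vector_derivative v) (at 0) \<longrightarrow>
        ((\<lambda>t. f (\<gamma> t)) has_real_derivative 0) (at 0))"

definition sym_pos_def_matrix :: "real^'n^'n \<Rightarrow> bool" where
  "sym_pos_def_matrix U \<longleftrightarrow> transpose U = U \<and> (\<forall>x. x \<noteq> 0 \<longrightarrow> x \<bullet> (U *v x) > 0)"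

end

theory Submission imports Defs begin

lemma bil_mult: "bounded_bilinear (\<lambda>(A::real^'n^'n) (B::real^'n^'n). A ** B)"
proof -
  have r: "\<And>(A::real^'n^'n) B C. (A + B) ** C = A ** C + B ** C"
    by (vector matrix_matrix_mult_def sum.distrib[symmetric] field_simps)
  have "bilinear (\<lambda>(A::real^'n^'n) (B::real^'n^'n). A ** B)"
    unfolding bilinear_def
    by (auto intro!: linearI simp: r matrix_add_ldistrib r matrix_scalar_ac scalar_matrix_assoc)
  then show ?thesis by (simp add: bilinear_conv_bounded_bilinear)
qed

lemma bl_transpose: "bounded_linear (transpose :: real^'n^'n \<Rightarrow> real^'n^'n)"
  unfolding linear_conv_bounded_linear[symmetric]
  by (auto intro!: linearI simp: vec_eq_iff transpose_def)

lemma bl_msym: "bounded_linear (msym :: real^'n^'n \<Rightarrow> real^'n^'n)"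
  unfolding linear_conv_bounded_linear[symmetric]
  by (auto intro!: linearI simp: vec_eq_iff transpose_def msym_def algebra_simps)

lemma bl_mskew: "bounded_linear (mskew :: real^'n^'n \<Rightarrow> real^'n^'n)"
  unfolding linear_conv_bounded_linear[symmetric]
  by (auto intro!: linearI simp: vec_eq_iff transpose_def mskew_def algebra_simps)

lemma inner_trace: "inner (A::real^'n^'n) B = trace (transpose A ** B)"
  by (simp add: inner_vec_def trace_def matrix_matrix_mult_def transpose_def)
    (subst sum.swap, simp)

lemma inner_transpose: "inner (transpose (A::real^'n^'n)) (transpose B) = inner A B"
  by (simp add: inner_vec_def transpose_def) (subst sum.swap, simp)

lemma msym_T: "transpose (msym (Y::real^'n^'n)) = msym Y"
  by (simp add: msym_def vec_eq_iff transpose_def)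

lemma msub_rdistrib: "\<And>(A::real^'n^'n) B C. (A - B) ** C = A ** C - B ** C"
  by (vector matrix_matrix_mult_def sum_subtractf[symmetric] field_simps)

lemma fro_sq_inner: "fro_sq Y = inner Y Y"
  by (simp add: fro_sq_def inner_trace)

lemma trace_transpose': "trace (transpose (A::real^'n^'n)) = trace A"
  by (simp add: trace_def transpose_def)

lemma trace_skew_sym:
  fixes B W :: "real^'n^'n"
  assumes "transpose B = - B" "transpose W = W"
  shows "trace (B ** W) = 0"
proof -
  have "trace (B ** W) = trace (transpose (B ** W))" by (simp add: trace_transpose')
  also have "\<dots> = trace (W ** (- B))" using assms by (simp add: matrix_transpose_mul)
  also have "\<dots> = - trace (W ** B)"
    by (simp add: trace_def matrix_matrix_mult_def sum_negf)
  also have "\<dots> = - trace (B ** W)" using trace_mul_sym[of W B] by simp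
  finally show ?thesis by simp
qed

lemma crit_lemma:
  fixes F R :: "real^'n^'n"
  assumes RS: "R \<in> SOn" and sym: "transpose (transpose R ** F) = transpose R ** F"
  shows "critical_point_SO (Wtilde mu muc F) R"
  unfolding critical_point_SO_def
proof (intro conjI allI impI RS)
  fix \<gamma> :: "real \<Rightarrow> real^'n^'n" and v
  assume inS: "\<forall>t. \<gamma> t \<in> SOn" and g0: "\<gamma> 0 = R" and dv: "(\<gamma> has_vector_derivative v) (at 0)"
  have orth: "transpose (\<gamma> t) ** \<gamma> t = mat 1" for t
    using inS by (simp add: SOn_def rotation_matrix_def orthogonal_matrix_def)
  have RR: "R ** transpose R = mat 1"
    using RS by (simp add: SOn_def rotation_matrix_def orthogonal_matrix_def)
  have dT: "((\<lambda>t. transpose (\<gamma> t)) has_vector_derivative transpose v) (at 0)"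
    by (rule bounded_linear.has_vector_derivative[OF bl_transpose dv])
  have d1: "((\<lambda>t. transpose (\<gamma> t) ** \<gamma> t) has_vector_derivative
      (transpose (\<gamma> 0) ** v + transpose v ** \<gamma> 0)) (at 0)"
    using bounded_bilinear.has_vector_derivative[OF bil_mult dT dv] by simp
  moreover have "((\<lambda>t. transpose (\<gamma> t) ** \<gamma> t) has_vector_derivative 0) (at 0)"
    using orth by simp
  ultimately have skew0: "transpose R ** v + transpose v ** R = 0"
    using vector_derivative_unique_at g0 by metis
  define B where "B = transpose v ** R"
  have Bskew: "transpose B = - B"
    using skew0 by (simp add: B_def matrix_transpose_mul eq_neg_iff_add_eq_0 add.commute)
  define U where "U = transpose R ** F"
  have Usym: "transpose U = U" using sym by (simp add: U_def)
  have dM: "((\<lambda>t. transpose (\<gamma> t) ** F - mat 1) has_vector_derivative transpose v ** F) (at 0)"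
    using bounded_bilinear.has_vector_derivative[OF bil_mult dT has_vector_derivative_const[of F]]
    by (simp add: has_vector_derivative_diff_const)
  have dS: "((\<lambda>t. msym (transpose (\<gamma> t) ** F - mat 1)) has_vector_derivative msym (transpose v ** F)) (at 0)"
    by (rule bounded_linear.has_vector_derivative[OF bl_msym dM])
  have dK: "((\<lambda>t. mskew (transpose (\<gamma> t) ** F - mat 1)) has_vector_derivative mskew (transpose v ** F)) (at 0)"
    by (rule bounded_linear.has_vector_derivative[OF bl_mskew dM])
  define S0 where "S0 = msym (U - mat 1)"
  define K0 where "K0 = mskew (U - mat 1)"
  define S' where "S' = msym (transpose v ** F)"
  define K' where "K' = mskew (transpose v ** F)"
  have dSS: "((\<lambda>t. inner (msym (transpose (\<gamma> t) ** F - mat 1)) (msym (transpose (\<gamma> t) ** F - mat 1)))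
      has_vector_derivative (inner S0 S' + inner S' S0)) (at 0)"
    using bounded_bilinear.has_vector_derivative[OF bounded_bilinear_inner dS dS]
    by (simp add: g0 S0_def S'_def U_def)
  have dKK: "((\<lambda>t. inner (mskew (transpose (\<gamma> t) ** F - mat 1)) (mskew (transpose (\<gamma> t) ** F - mat 1)))
      has_vector_derivative (inner K0 K' + inner K' K0)) (at 0)"
    using bounded_bilinear.has_vector_derivative[OF bounded_bilinear_inner dK dK]
    by (simp add: g0 K0_def K'_def U_def)
  have K00: "K0 = 0" using Usym by (simp add: K0_def mskew_def transpose_def vec_eq_iff mat_def)
  have S0e: "S0 = U - mat 1" using Usym
    by (simp add: S0_def msym_def vec_eq_iff transpose_def mat_def)
  have vF: "transpose v ** F = B ** U"
  proof -
    have "R ** (transpose R ** F) = F" by (simp add: matrix_mul_assoc RR)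
    then show ?thesis by (simp add: B_def U_def matrix_mul_assoc[symmetric])
  qed
  have "inner S0 S' = inner S0 (transpose v ** F)"
  proof -
    have "inner S0 S' = (1/2) * (inner S0 (transpose v ** F) + inner S0 (transpose (transpose v ** F)))"
      by (simp add: S'_def msym_def inner_add_right)
    moreover have "inner S0 (transpose (transpose v ** F)) = inner S0 (transpose v ** F)"
      using inner_transpose[of S0 "transpose v ** F"] msym_T[of "U - mat 1"]
      by (simp add: S0_def)
    ultimately show ?thesis by simp
  qed
  also have "\<dots> = trace ((U - mat 1) ** (B ** U))"
  proof -
    have S0T: "transpose S0 = S0" by (simp add: S0_def msym_T)
    have T: "transpose (U - mat 1) = U - mat 1" using S0T S0e by simp
    show ?thesis unfolding inner_trace vF S0e T ..
  qed
  also have "\<dots> = trace (U ** B ** U) - trace (B ** U)"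
    by (simp only: msub_rdistrib trace_sub matrix_mul_assoc matrix_mul_lid)
  also have "\<dots> = 0"
  proof -
    have "trace (U ** B ** U) = trace (B ** (U ** U))"
      using trace_mul_sym[of U "B ** U"] by (simp only: matrix_mul_assoc)
    also have "\<dots> = 0" using Usym Bskew by (intro trace_skew_sym) (auto simp: matrix_transpose_mul)
    finally show ?thesis using trace_skew_sym[OF Bskew Usym] by simp
  qed
  finally have SS0: "inner S0 S' = 0" .
  have "((\<lambda>t. Wtilde mu muc F (\<gamma> t)) has_vector_derivative
      (mu * (inner S0 S' + inner S' S0) + muc * (inner K0 K' + inner K' K0))) (at 0)"
    unfolding Wtilde_def fro_sq_inner
    by (intro has_vector_derivative_add bounded_linear.has_vector_derivative[OF bounded_linear_mult_right dSS]
        bounded_linear.has_vector_derivative[OF bounded_linear_mult_right dKK])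
  then show "((\<lambda>t. Wtilde mu muc F (\<gamma> t)) has_real_derivative 0) (at 0)"
    using SS0 K00 by (simp add: has_real_derivative_iff_has_vector_derivative inner_commute)
qed

theorem mainTheorem2:
  fixes F X :: "real^'n^'n" and mu muc :: real
  assumes "CARD('n) \<ge> 2"
    and "det F > 0"
    and "mu > 0" and "muc \<ge> 0"
  shows "(transpose X = X \<and> X ** X = F ** transpose F \<and> det X > 0 \<longrightarrow>
            transpose X ** transpose (matrix_inv F) \<in> SOn \<and>
            critical_point_SO (Wtilde mu muc F) (transpose X ** transpose (matrix_inv F)))
       \<and> (\<forall>Rp U. Rp \<in> SOn \<and> sym_pos_def_matrix U \<and> F = Rp ** U \<longrightarrow>
            critical_point_SO (Wtilde mu muc F) Rp)"
proof (intro conjI impI allI)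
  fix Rp U :: "real^'n^'n"
  assume h: "Rp \<in> SOn \<and> sym_pos_def_matrix U \<and> F = Rp ** U"
  then have "transpose Rp ** Rp = mat 1"
    by (simp add: SOn_def rotation_matrix_def orthogonal_matrix_def)
  then have "transpose Rp ** F = U" using h by (simp add: matrix_mul_assoc)
  moreover have "transpose U = U" using h by (simp add: sym_pos_def_matrix_def)
  ultimately show "critical_point_SO (Wtilde mu muc F) Rp"
    using h crit_lemma by metis
next
  assume h: "transpose X = X \<and> X ** X = F ** transpose F \<and> det X > 0"
  define G where "G = matrix_inv F"
  have "invertible F" using assms(2) by (simp add: invertible_det_nz)
  then have FG: "F ** G = mat 1 \<and> G ** F = mat 1"
    unfolding G_def matrix_inv_def invertible_def by (rule someI_ex)
  have GT: "transpose F ** transpose G = mat 1" "transpose G ** transpose F = mat 1"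
    using FG by (metis matrix_transpose_mul transpose_mat)+
  define R where "R = transpose X ** transpose G"
  have RT: "transpose R = G ** X" using h by (simp add: R_def matrix_transpose_mul)
  have XT: "transpose X = X" and XX: "X ** X = F ** transpose F" using h by auto
  have "transpose R ** R = G ** (X ** X) ** transpose G"
    unfolding RT by (simp only: R_def XT matrix_mul_assoc)
  also have "\<dots> = (G ** F) ** (transpose F ** transpose G)"
    by (simp only: XX matrix_mul_assoc)
  also have "\<dots> = mat 1" using FG GT by simp
  finally have orth: "orthogonal_matrix R" by (simp add: orthogonal_matrix)
  have "det G * det F = 1" using FG by (metis det_I det_mul)
  then have "det G > 0" using assms(2)
    by (metis less_numeral_extra(1) not_less order.asym zero_less_mult_iff)
  then have "det R > 0" using h by (simp add: R_def det_mul)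
  then have "det R = 1" using det_orthogonal_matrix[OF orth] by auto
  then have RS: "R \<in> SOn" using orth by (simp add: SOn_def rotation_matrix_def)
  have "G ** X ** F = G ** X ** F ** (transpose F ** transpose G)" using GT by simp
  also have "\<dots> = G ** (X ** (F ** transpose F)) ** transpose G" by (simp add: matrix_mul_assoc)
  also have "\<dots> = G ** ((F ** transpose F) ** X) ** transpose G"
  proof -
    have "X ** (F ** transpose F) = (F ** transpose F) ** X"
      by (simp only: XX[symmetric] matrix_mul_assoc)
    then show ?thesis by simp
  qed
  also have "\<dots> = (G ** F) ** transpose F ** X ** transpose G" by (simp add: matrix_mul_assoc)
  also have "\<dots> = transpose (G ** X ** F)" using FG h by (simp add: matrix_transpose_mul matrix_mul_assoc)
  finally have "transpose (transpose R ** F) = transpose R ** F" using RT by simp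
  then show "critical_point_SO (Wtilde mu muc F) (transpose X ** transpose (matrix_inv F))"
    using crit_lemma[OF RS] by (simp add: R_def G_def)
  show "transpose X ** transpose (matrix_inv F) \<in> SOn" using RS by (simp add: R_def G_def)
qed

end
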